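(* Let $p\in(0,1)$, $\gamma>0$, $\beta_*>0$, and set $\gamma_1:=\gamma/p$. Let $K$ be a kernel satisfying [A1]–[A4] and $g_K(s):=sK(s)$. Let $E_1,E_2,\dots$ be iid standard exponential random variables and $u_{j,k}:=j/(k+1)$. Then, as $k\to\infty$, $$\pi_k:=\frac1{k+1}\sum_{i=2}^k u_{i,k}^{\beta_*\gamma}\Big(\frac1i\sum_{j=2}^i u_{j,k}^{p-1}g_K'(u_{j,k}^p)\Big)E_i\ \xrightarrow{\ \mathbf P\ }\ \frac1{p^2}\int_0^1 t^{\gamma_1\beta_*}K(t)\,dt.$$
   Context: Kernel assumptions: [A1] $K$ is nonincreasing and right-continuous on $\mathbb R$; [A2] $K(s)=0$ for $s\notin(0,1]$ and $K(s)\ge0$ for $s\in(0,1]$; [A3] $\int_{\mathbb R}K(s)\,ds=1$; [A4] $K$ and its first and second Lebesgue derivatives $K',K''$ are bounded. *)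

theory Defs
  imports "HOL-Probability.Probability"
begin

definition gK :: "(real \<Rightarrow> real) \<Rightarrow> real \<Rightarrow> real" where
  "gK K s = s * K s"

definition u :: "nat \<Rightarrow> nat \<Rightarrow> real" where
  "u j k = real j / (real k + 1)"

definition conv_in_prob :: "'a measure \<Rightarrow> (nat \<Rightarrow> 'a \<Rightarrow> real) \<Rightarrow> real \<Rightarrow> bool" where
  "conv_in_prob M X c \<longleftrightarrow>
     (\<forall>\<epsilon>>0. (\<lambda>k. measure M {\<omega> \<in> space M. \<bar>X k \<omega> - c\<bar> > \<epsilon>}) \<longlonglongrightarrow> 0)"

end

theory Submission
  imports Defs
begin


lemma prob_part:
  fixes M :: "'a measure" and E :: "nat \<Rightarrow> 'a \<Rightarrow> real" and a :: "nat \<Rightarrow> real"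
  assumes M: "prob_space M" and indep: "prob_space.indep_vars M (\<lambda>_. borel) E {1..}"
    and expo: "\<And>i. i \<ge> 1 \<Longrightarrow> distributed M lborel (E i) (exponential_density 1)"
    and I: "finite I" "I \<subseteq> {1..}" and eps: "\<epsilon> > 0"
  shows "measure M {\<omega>\<in>space M. \<epsilon> \<le> \<bar>(\<Sum>i\<in>I. a i * E i \<omega>) - (\<Sum>i\<in>I. a i)\<bar>} \<le> (\<Sum>i\<in>I. (a i)\<^sup>2) / \<epsilon>\<^sup>2"
proof -
  interpret prob_space M by (rule M)
  define D where "D i \<omega> = E i \<omega> - 1" for i \<omega>
  have ex: "distributed M lborel (E i) (erlang_density 0 1)" if "i \<in> I" for i
    using expo that I(2) by auto
  have int1: "integrable M (E i)" if "i \<in> I" for i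
    using erlang_ith_moment_integrable[OF _ ex[OF that], of 1] by simp
  have int2: "integrable M (\<lambda>x. E i x ^ 2)" if "i \<in> I" for i
    using erlang_ith_moment_integrable[OF _ ex[OF that], of 2] by simp
  have e1: "expectation (E i) = 1" if "i \<in> I" for i
    using erlang_ith_moment[OF _ ex[OF that], of 1] by simp
  have e2: "expectation (\<lambda>x. E i x ^ 2) = 2" if "i \<in> I" for i
    using erlang_ith_moment[OF _ ex[OF that], of 2] by simp
  have intD: "integrable M (D i)" if "i \<in> I" for i
    unfolding D_def using int1[OF that] by auto
  have eD: "expectation (D i) = 0" if "i \<in> I" for i
    unfolding D_def using int1[OF that] e1[OF that] by (simp add: prob_space)
  have meas: "E i \<in> borel_measurable M" if "i \<in> I" for i
    using distributed_measurable[OF ex[OF that]] by simp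
  have indD: "indep_vars (\<lambda>_. borel) D I"
  proof -
    have "indep_vars (\<lambda>_. borel) (\<lambda>i x. (\<lambda>y. y - 1) (E i x)) {1..}"
      by (rule indep_vars_compose2[OF indep]) auto
    then show ?thesis unfolding D_def using indep_vars_subset I(2) by blast
  qed
  have DD: "integrable M (\<lambda>\<omega>. D i \<omega> * D j \<omega>) \<and> expectation (\<lambda>\<omega>. D i \<omega> * D j \<omega>) = (if i = j then 1 else 0)"
    if "i \<in> I" "j \<in> I" for i j
  proof (cases "i = j")
    case True
    have eq: "(\<lambda>\<omega>. D i \<omega> * D j \<omega>) = (\<lambda>\<omega>. E i \<omega> ^ 2 - 2 * E i \<omega> + 1)"
      using True by (auto simp: D_def power2_eq_square algebra_simps)
    have i2: "integrable M (\<lambda>\<omega>. E i \<omega> ^ 2 - 2 * E i \<omega>)"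
      using int1[OF that(1)] int2[OF that(1)] by auto
    show ?thesis unfolding eq using True i2 int1[OF that(1)] int2[OF that(1)] e1[OF that(1)] e2[OF that(1)]
      by (simp add: prob_space Bochner_Integration.integral_add Bochner_Integration.integral_diff)
  next
    case False
    have ind2: "indep_vars (\<lambda>_. borel) D {i, j}"
      using indep_vars_subset[OF indD] that by auto
    have "integrable M (\<lambda>\<omega>. \<Prod>k\<in>{i,j}. D k \<omega>)" "expectation (\<lambda>\<omega>. \<Prod>k\<in>{i,j}. D k \<omega>) = (\<Prod>k\<in>{i,j}. expectation (D k))"
      using indep_vars_integrable[OF _ ind2] indep_vars_lebesgue_integral[OF _ ind2] intD that by auto
    then show ?thesis using False eD that by simp
  qed
  define Y where "Y \<omega> = (\<Sum>i\<in>I. a i * D i \<omega>)" for \<omega>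
  have Yeq: "(\<Sum>i\<in>I. a i * E i \<omega>) - (\<Sum>i\<in>I. a i) = Y \<omega>" for \<omega>
    unfolding Y_def D_def by (simp add: algebra_simps sum_subtractf)
  have Y2: "(Y \<omega>)\<^sup>2 = (\<Sum>i\<in>I. \<Sum>j\<in>I. a i * a j * (D i \<omega> * D j \<omega>))" for \<omega>
    unfolding Y_def power2_eq_square sum_product by (simp add: algebra_simps)
  have intY2: "integrable M (\<lambda>\<omega>. (Y \<omega>)^2)"
    unfolding Y2 using DD by (intro Bochner_Integration.integrable_sum) auto
  have eY2: "expectation (\<lambda>\<omega>. (Y \<omega>)^2) = (\<Sum>i\<in>I. (a i)\<^sup>2)"
  proof -
    have "expectation (\<lambda>\<omega>. (Y \<omega>)^2) = (\<Sum>i\<in>I. \<Sum>j\<in>I. a i * a j * expectation (\<lambda>\<omega>. D i \<omega> * D j \<omega>))"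
      unfolding Y2 using DD by (simp add: Bochner_Integration.integral_sum)
    also have "\<dots> = (\<Sum>i\<in>I. \<Sum>j\<in>I. if i = j then (a i)\<^sup>2 else 0)"
      using DD by (intro sum.cong) (auto simp: power2_eq_square)
    also have "\<dots> = (\<Sum>i\<in>I. (a i)\<^sup>2)"
      using I(1) by (simp add: sum.delta)
    finally show ?thesis .
  qed
  have eY: "expectation Y = 0"
    unfolding Y_def using intD eD by (simp add: Bochner_Integration.integral_sum)
  have mY: "random_variable borel Y"
    unfolding Y_def D_def using meas by measurable
  have "prob {\<omega>\<in>space M. \<bar>Y \<omega> - expectation Y\<bar> \<ge> \<epsilon>} \<le> variance Y / \<epsilon>\<^sup>2"
    by (rule Chebyshev_inequality[OF mY intY2 eps])
  then show ?thesis unfolding Yeq using eY eY2 by simp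
qed



lemma powr_step:
  assumes "0 < e" "e \<le> 1" "(x::real) \<ge> 0"
  shows "e * (x + 1) powr (e - 1) \<le> (x + 1) powr e - x powr e"
proof (cases "x = 0")
  case True then show ?thesis using assms by simp
next
  case False
  then have x: "x > 0" using assms by simp
  have "\<exists>z. x < z \<and> z < x + 1 \<and> (x+1) powr e - x powr e = (x + 1 - x) * (e * z powr (e - 1))"
    by (rule MVT2) (use x in \<open>auto intro!: has_real_derivative_powr\<close>)
  then obtain z where z: "x < z" "z < x + 1" "(x+1) powr e - x powr e = e * z powr (e - 1)" by auto
  have "(x + 1) powr (e - 1) \<le> z powr (e - 1)"
    using z x assms by (intro powr_mono2') auto
  then show ?thesis using z assms by (simp add: mult_left_mono)
qed

lemma sum_powr_le:
  assumes "0 < e" "e \<le> 1"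
  shows "(\<Sum>m=1..n. real m powr (e - 1)) \<le> real n powr e / e"
proof (induction n)
  case 0 then show ?case by simp
next
  case (Suc n)
  have "(\<Sum>m=1..Suc n. real m powr (e - 1)) = (\<Sum>m=1..n. real m powr (e - 1)) + (real n + 1) powr (e - 1)"
    by (simp add: add.commute)
  also have "\<dots> \<le> real n powr e / e + ((real n + 1) powr e - real n powr e) / e"
    using Suc.IH powr_step[OF assms, of "real n"] assms by (simp add: field_simps)
  also have "\<dots> = real (Suc n) powr e / e" using assms by (simp add: add_divide_distrib[symmetric] add.commute)
  finally show ?case .
qed

lemma riemann_step:
  fixes F f f' :: "real \<Rightarrow> real"
  assumes xy: "x < y"
    and dF: "\<And>s. x \<le> s \<Longrightarrow> s \<le> y \<Longrightarrow> (F has_real_derivative f s) (at s)"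
    and df: "\<And>s. x \<le> s \<Longrightarrow> s \<le> y \<Longrightarrow> (f has_real_derivative f' s) (at s)"
    and B: "\<And>s. x \<le> s \<Longrightarrow> s \<le> y \<Longrightarrow> \<bar>f' s\<bar> \<le> B"
  shows "\<bar>F y - F x - (y - x) * f y\<bar> \<le> B * (y - x)\<^sup>2"
proof -
  have fb: "\<bar>f s - f y\<bar> \<le> B * (y - x)" if sx: "x \<le> s" "s \<le> y" for s
  proof (cases "s = y")
    case True then show ?thesis using B[of x] xy by simp
  next
    case False
    then have sy: "s < y" using sx by simp
    have "\<exists>z. s < z \<and> z < y \<and> f y - f s = (y - s) * f' z"
      by (rule MVT2[OF sy]) (use df sx in auto)
    then obtain z where z: "s < z" "z < y" "f y - f s = (y - s) * f' z" by blast
    have "\<bar>f y - f s\<bar> = (y - s) * \<bar>f' z\<bar>" using z by (simp add: abs_mult)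
    also have "\<dots> \<le> (y - x) * B"
      using B[of z] z sx by (intro mult_mono) auto
    finally show ?thesis by (simp add: abs_minus_commute mult.commute)
  qed
  define G where "G s = F s - s * f y" for s
  obtain z where z: "x < z" "z < y" "G y - G x = (y - x) * (f z - f y)"
    using MVT2[of x y G "\<lambda>s. f s - f y"] xy unfolding G_def
    by (force intro!: derivative_eq_intros dF)
  have "\<bar>F y - F x - (y - x) * f y\<bar> = \<bar>G y - G x\<bar>" unfolding G_def by (simp add: algebra_simps)
  also have "\<dots> = (y - x) * \<bar>f z - f y\<bar>" using z xy by (simp add: abs_mult)
  also have "\<dots> \<le> (y - x) * (B * (y - x))" using fb[of z] z xy by (intro mult_left_mono) auto
  finally show ?thesis by (simp add: power2_eq_square mult_ac)
qed

lemma riemann_sum_aux: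
  fixes F f f' :: "real \<Rightarrow> real"
  assumes a: "-1 < a" "a \<le> 1" and M: "0 \<le> M"
    and dF: "\<And>s. 0 < s \<Longrightarrow> s < 1 \<Longrightarrow> (F has_real_derivative f s) (at s)"
    and df: "\<And>s. 0 < s \<Longrightarrow> s < 1 \<Longrightarrow> (f has_real_derivative f' s) (at s)"
    and B: "\<And>s. 0 < s \<Longrightarrow> s < 1 \<Longrightarrow> \<bar>f' s\<bar> \<le> M * s powr (a - 1)"
    and n: "1 \<le> n" "n \<le> k"
  shows "\<bar>(\<Sum>j=2..n. (1 / (real k + 1)) * f (u j k)) - (F (u n k) - F (u 1 k))\<bar>
          \<le> M * (1 / (real k + 1)) powr (a + 1) * (\<Sum>m=1..n-1. real m powr (a - 1))"
  using n
proof (induction n rule: dec_induct)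
  case base then show ?case by simp
next
  case (step n)
  define h where "h = 1 / (real k + 1)"
  have h: "0 < h" "h \<le> 1" unfolding h_def by auto
  have un: "u n k = real n * h" "u (Suc n) k = real n * h + h" unfolding u_def h_def by (auto simp: field_simps)
  have n1: "real n * h > 0" using step h by auto
  have n2: "real n * h + h < 1" using step h unfolding h_def by (auto simp: field_simps)
  have "\<bar>F (u (Suc n) k) - F (u n k) - (u (Suc n) k - u n k) * f (u (Suc n) k)\<bar>
        \<le> (M * (real n * h) powr (a - 1)) * (u (Suc n) k - u n k)\<^sup>2"
  proof (rule riemann_step)
    show "u n k < u (Suc n) k" using un h by simp
  next
    fix s assume s: "u n k \<le> s" "s \<le> u (Suc n) k"
    then have s': "0 < s" "s < 1" using un n1 n2 by auto
    show "(F has_real_derivative f s) (at s)" by (rule dF[OF s'])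
    show "(f has_real_derivative f' s) (at s)" by (rule df[OF s'])
    have "s powr (a - 1) \<le> (real n * h) powr (a - 1)"
      using s un n1 a by (intro powr_mono2') auto
    then show "\<bar>f' s\<bar> \<le> M * (real n * h) powr (a - 1)"
      using B[OF s'] M by (meson mult_left_mono order_trans)
  qed
  then have st: "\<bar>F (u (Suc n) k) - F (u n k) - h * f (u (Suc n) k)\<bar> \<le> M * h powr (a + 1) * real n powr (a - 1)"
  proof -
    have "(real n * h) powr (a - 1) * h\<^sup>2 = h powr (a + 1) * real n powr (a - 1)"
      using h step by (simp add: powr_mult powr_add power2_eq_square powr_diff field_simps)
    moreover assume "\<bar>F (u (Suc n) k) - F (u n k) - (u (Suc n) k - u n k) * f (u (Suc n) k)\<bar>
        \<le> (M * (real n * h) powr (a - 1)) * (u (Suc n) k - u n k)\<^sup>2"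
    ultimately show ?thesis using un by (simp add: mult_ac)
  qed
  have sum1: "(\<Sum>j=2..Suc n. h * f (u j k)) = (\<Sum>j=2..n. h * f (u j k)) + h * f (u (Suc n) k)"
    using step by (simp add: sum.atLeast_Suc_atMost_Suc_shift del: sum.cl_ivl_Suc) (simp add: sum.cl_ivl_Suc)
  have sum2: "(\<Sum>m=1..Suc n - 1. real m powr (a - 1)) = (\<Sum>m=1..n-1. real m powr (a - 1)) + real n powr (a - 1)"
    using step by (cases n) auto
  have IH: "\<bar>(\<Sum>j=2..n. h * f (u j k)) - (F (u n k) - F (u 1 k))\<bar> \<le> M * h powr (a + 1) * (\<Sum>m=1..n-1. real m powr (a - 1))"
    using step.IH step by (simp add: h_def)
  have "\<bar>(\<Sum>j=2..Suc n. h * f (u j k)) - (F (u (Suc n) k) - F (u 1 k))\<bar>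
     \<le> \<bar>(\<Sum>j=2..n. h * f (u j k)) - (F (u n k) - F (u 1 k))\<bar> + \<bar>F (u (Suc n) k) - F (u n k) - h * f (u (Suc n) k)\<bar>"
    unfolding sum1 by linarith
  also have "\<dots> \<le> M * h powr (a + 1) * (\<Sum>m=1..Suc n - 1. real m powr (a - 1))"
    unfolding sum2 using IH st by (simp add: algebra_simps)
  finally show ?case by (simp add: h_def)
qed

lemma riemann_sum:
  fixes F f f' :: "real \<Rightarrow> real"
  assumes a: "-1 < a" "a \<le> 1" and M: "0 \<le> M"
    and dF: "\<And>s. 0 < s \<Longrightarrow> s < 1 \<Longrightarrow> (F has_real_derivative f s) (at s)"
    and df: "\<And>s. 0 < s \<Longrightarrow> s < 1 \<Longrightarrow> (f has_real_derivative f' s) (at s)"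
    and B: "\<And>s. 0 < s \<Longrightarrow> s < 1 \<Longrightarrow> \<bar>f' s\<bar> \<le> M * s powr (a - 1)"
    and n: "1 \<le> n" "n \<le> k"
  shows "\<bar>(\<Sum>j=2..n. (1 / (real k + 1)) * f (u j k)) - (F (u n k) - F (u 1 k))\<bar>
          \<le> M * (2 / (a + 1)) * (1 / (real k + 1)) powr ((a + 1) / 2)"
proof -
  define h where "h = 1 / (real k + 1)"
  define e where "e = (a + 1) / 2"
  have h: "0 < h" "h \<le> 1" unfolding h_def by auto
  have e: "0 < e" "e \<le> 1" "a \<le> e" using a unfolding e_def by auto
  have "(\<Sum>m=1..n-1. real m powr (a - 1)) \<le> (\<Sum>m=1..n-1. real m powr (e - 1))"
    using e by (intro sum_mono powr_mono) auto
  also have "\<dots> \<le> real (n - 1) powr e / e" by (rule sum_powr_le[OF e(1,2)])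
  also have "\<dots> \<le> (1 / h) powr e / e"
    using n e h unfolding h_def by (intro divide_right_mono powr_mono2) auto
  finally have S: "(\<Sum>m=1..n-1. real m powr (a - 1)) \<le> (1 / h) powr e / e" .
  have "M * h powr (a + 1) * (\<Sum>m=1..n-1. real m powr (a - 1)) \<le> M * h powr (a + 1) * ((1 / h) powr e / e)"
    using S M h by (intro mult_left_mono) auto
  also have "\<dots> = M * (1 / e) * h powr e"
  proof -
    have "h powr (a + 1) * (1 / h) powr e = h powr e"
      using h by (simp add: powr_divide powr_add[symmetric] e_def powr_minus_divide[symmetric] field_simps)
    then show ?thesis by (simp add: field_simps)
  qed
  finally show ?thesis
    using riemann_sum_aux[OF assms] unfolding h_def e_def by simp
qed



locale kern =
  fixes K K' K'' :: "real \<Rightarrow> real" and p \<gamma> \<beta> :: real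
  assumes p: "0 < p" "p < 1" and gam: "\<gamma> > 0" and beta: "\<beta> > 0"
    and A2_out: "\<And>s. s \<notin> {0<..1} \<Longrightarrow> K s = 0"
    and A2_nonneg: "\<And>s. s \<in> {0<..1} \<Longrightarrow> K s \<ge> 0"
    and A3: "(K has_integral 1) UNIV"
    and A4_d1: "\<And>x. x \<in> {0<..<1} \<Longrightarrow> (K has_real_derivative K' x) (at x)"
    and A4_d2: "\<And>x. x \<in> {0<..<1} \<Longrightarrow> (K' has_real_derivative K'' x) (at x)"
    and A4_bdd: "bounded (range K)" "bounded (K' ` {0<..<1})" "bounded (K'' ` {0<..<1})"

context kern begin

definition "g1 x = K x + x * K' x"
definition "g2 x = 2 * K' x + x * K'' x"

lemma bounds: obtains BK B1 B2 where "\<And>x. \<bar>K x\<bar> \<le> BK" "\<And>x. x \<in> {0<..<1} \<Longrightarrow> \<bar>K' x\<bar> \<le> B1"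
   "\<And>x. x \<in> {0<..<1} \<Longrightarrow> \<bar>K'' x\<bar> \<le> B2" "0 \<le> BK" "0 \<le> B1" "0 \<le> B2"
proof -
  obtain BK where "\<forall>x\<in>range K. norm x \<le> BK" using A4_bdd(1) bounded_iff by blast
  moreover obtain B1 where "\<forall>x\<in>K' ` {0<..<1}. norm x \<le> B1" using A4_bdd(2) bounded_iff by blast
  moreover obtain B2 where "\<forall>x\<in>K'' ` {0<..<1}. norm x \<le> B2" using A4_bdd(3) bounded_iff by blast
  ultimately show ?thesis
    apply (intro that[of "max BK 0" "max B1 0" "max B2 0"])
    apply (auto simp: max_def)
    apply (smt (verit) greaterThanLessThan_iff imageI)+
    done
qed

lemma gK_deriv: "x \<in> {0<..<1} \<Longrightarrow> (gK K has_real_derivative g1 x) (at x)"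
  unfolding gK_def[abs_def] g1_def
  by (auto intro!: derivative_eq_intros A4_d1 simp: algebra_simps)

lemma g1_deriv: "x \<in> {0<..<1} \<Longrightarrow> (g1 has_real_derivative g2 x) (at x)"
  unfolding g1_def[abs_def] g2_def
  by (auto intro!: derivative_eq_intros A4_d1 A4_d2 simp: algebra_simps)

lemma deriv_gK: "x \<in> {0<..<1} \<Longrightarrow> deriv (gK K) x = g1 x"
  using gK_deriv DERIV_imp_deriv by blast

lemma g_bounds: obtains G G2 where "\<And>x. x \<in> {0<..<1} \<Longrightarrow> \<bar>g1 x\<bar> \<le> G"
  "\<And>x. x \<in> {0<..<1} \<Longrightarrow> \<bar>g2 x\<bar> \<le> G2" "0 \<le> G" "0 \<le> G2"
proof -
  obtain BK B1 B2 where B: "\<And>x. \<bar>K x\<bar> \<le> BK" "\<And>x. x \<in> {0<..<1} \<Longrightarrow> \<bar>K' x\<bar> \<le> B1"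
   "\<And>x. x \<in> {0<..<1} \<Longrightarrow> \<bar>K'' x\<bar> \<le> B2" "0 \<le> BK" "0 \<le> B1" "0 \<le> B2" using bounds by blast
  show ?thesis
  proof (rule that[of "BK + B1" "2 * B1 + B2"])
    fix x :: real assume x: "x \<in> {0<..<1}"
    have "\<bar>x * K' x\<bar> \<le> 1 * B1" unfolding abs_mult using x B(2)[OF x] by (intro mult_mono) auto
    then show "\<bar>g1 x\<bar> \<le> BK + B1" unfolding g1_def using B(1)[of x] by simp
    have "\<bar>x * K'' x\<bar> \<le> 1 * B2" unfolding abs_mult using x B(3)[OF x] by (intro mult_mono) auto
    then show "\<bar>g2 x\<bar> \<le> 2 * B1 + B2" unfolding g2_def using B(2)[OF x] by simp
  qed (use B in auto)
qed

definition "phi t = t powr (p - 1) * g1 (t powr p)"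
definition "phi' t = (p - 1) * t powr (p - 2) * g1 (t powr p) + t powr (p - 1) * (g2 (t powr p) * (p * t powr (p - 1)))"
definition "Phi t = t powr p * K (t powr p) / p"

lemma powr_in01: "t \<in> {0<..<1} \<Longrightarrow> t powr p \<in> {0<..<1}"
  using p powr_less_mono2[of p t 1] by auto

lemma Phi_deriv: "t \<in> {0<..<1} \<Longrightarrow> (Phi has_real_derivative phi t) (at t)"
proof -
  assume t: "t \<in> {0<..<1}"
  have "((\<lambda>t. gK K (t powr p) / p) has_real_derivative g1 (t powr p) * (p * t powr (p - 1)) / p) (at t)"
    using t by (auto intro!: derivative_eq_intros DERIV_chain2[OF gK_deriv] powr_in01)
  moreover have "(\<lambda>t. gK K (t powr p) / p) = Phi" by (auto simp: gK_def Phi_def)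
  ultimately show ?thesis using p by (simp add: phi_def mult.commute)
qed

lemma phi_deriv: "t \<in> {0<..<1} \<Longrightarrow> (phi has_real_derivative phi' t) (at t)"
proof -
  assume t: "t \<in> {0<..<1}"
  have d1: "((\<lambda>t. t powr (p - 1)) has_real_derivative (p - 1) * t powr (p - 1 - 1)) (at t)"
    using t by (intro has_real_derivative_powr) auto
  have d2: "((\<lambda>t. t powr p) has_real_derivative p * t powr (p - 1)) (at t)"
    using t by (intro has_real_derivative_powr) auto
  have d3: "((\<lambda>t. g1 (t powr p)) has_real_derivative g2 (t powr p) * (p * t powr (p - 1))) (at t)"
    by (rule DERIV_chain2[OF g1_deriv[OF powr_in01[OF t]] d2])
  have "(phi has_real_derivative (p - 1) * t powr (p - 1 - 1) * g1 (t powr p) + t powr (p - 1) * (g2 (t powr p) * (p * t powr (p - 1)))) (at t)"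
    unfolding phi_def[abs_def] by (rule DERIV_cong[OF DERIV_mult[OF d1 d3]]) (simp add: algebra_simps)
  then show ?thesis unfolding phi'_def by (simp add: diff_diff_eq)
qed


lemma phi_bounds: obtains G M1 where "\<And>t. t \<in> {0<..<1} \<Longrightarrow> \<bar>phi t\<bar> \<le> G * t powr (p - 1)"
  "\<And>t. t \<in> {0<..<1} \<Longrightarrow> \<bar>phi' t\<bar> \<le> M1 * t powr (p - 2)"
  "\<And>t. t \<in> {0<..<1} \<Longrightarrow> \<bar>g1 t\<bar> \<le> G"
  "0 \<le> G" "0 \<le> M1"
proof -
  obtain G G2 where G: "\<And>x. x \<in> {0<..<1} \<Longrightarrow> \<bar>g1 x\<bar> \<le> G"
    "\<And>x. x \<in> {0<..<1} \<Longrightarrow> \<bar>g2 x\<bar> \<le> G2" "0 \<le> G" "0 \<le> G2" using g_bounds by blast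
  show ?thesis
  proof (rule that[of G "(1 - p) * G + p * G2"])
    fix t :: real assume t: "t \<in> {0<..<1}"
    have tp: "t powr p \<in> {0<..<1}" by (rule powr_in01[OF t])
    show "\<bar>phi t\<bar> \<le> G * t powr (p - 1)"
      unfolding phi_def abs_mult using G(1)[OF tp] t by (simp add: mult.commute mult_left_mono)
    have e1: "\<bar>(p - 1) * t powr (p - 2) * g1 (t powr p)\<bar> \<le> ((1 - p) * G) * t powr (p - 2)"
      unfolding abs_mult using G(1)[OF tp] t p by (simp add: mult_ac mult_left_mono)
    have "t powr (p - 1) * t powr (p - 1) = t powr (2 * p - 2)" using t by (simp add: powr_add[symmetric])
    also have "\<dots> \<le> t powr (p - 2)" using t p by (intro powr_mono') auto
    finally have tt: "t powr (p - 1) * t powr (p - 1) \<le> t powr (p - 2)" .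
    have "\<bar>t powr (p - 1) * (g2 (t powr p) * (p * t powr (p - 1)))\<bar> = p * \<bar>g2 (t powr p)\<bar> * (t powr (p - 1) * t powr (p - 1))"
      using p by (simp add: abs_mult mult_ac)
    also have "\<dots> \<le> p * G2 * t powr (p - 2)"
      using G(2)[OF tp] tt p G(4) by (intro mult_mono) auto
    finally have e2: "\<bar>t powr (p - 1) * (g2 (t powr p) * (p * t powr (p - 1)))\<bar> \<le> p * G2 * t powr (p - 2)" .
    show "\<bar>phi' t\<bar> \<le> ((1 - p) * G + p * G2) * t powr (p - 2)"
      unfolding phi'_def using e1 e2 by (simp add: algebra_simps)
  qed (use G p in auto)
qed

lemma Phi_bound: obtains BK where "\<And>t. t \<in> {0<..<1} \<Longrightarrow> \<bar>Phi t\<bar> \<le> BK / p * t powr p" "0 \<le> BK"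
proof -
  obtain BK where B: "\<And>x. \<bar>K x\<bar> \<le> BK" "0 \<le> BK" using bounds by metis
  show ?thesis
  proof (rule that[of BK])
    fix t :: real assume t: "t \<in> {0<..<1}"
    show "\<bar>Phi t\<bar> \<le> BK / p * t powr p"
      unfolding Phi_def using B(1)[of "t powr p"] p t by (simp add: abs_mult field_simps mult_left_mono)
  qed (use B in auto)
qed



end


context kern begin
definition "psi t = t powr (\<gamma> / p * \<beta>) * K t"
definition "Psi t = integral {0..t} psi"
definition "FF s = Psi (s powr p) / p\<^sup>2"
definition "ff s = s powr (\<beta> * \<gamma> - 1) * Phi s"
definition "ff' s = (\<beta> * \<gamma> - 1) * s powr (\<beta> * \<gamma> - 1 - 1) * Phi s + s powr (\<beta> * \<gamma> - 1) * phi s"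

lemma c_pos: "\<gamma> / p * \<beta> > 0" using p gam beta by simp

lemma psi_int: "psi integrable_on {0..1}"
proof -
  have "K integrable_on cbox 0 1"
    by (rule integrable_on_subcbox[OF has_integral_integrable[OF A3]]) auto
  then have Ki: "K integrable_on {0..1}" by simp
  have K0: "K x \<ge> 0" for x using A2_out[of x] A2_nonneg[of x] by (cases "x \<in> {0<..1}") auto
  have Ka: "K absolutely_integrable_on {0..1}"
    by (rule nonnegative_absolutely_integrable_1[OF Ki]) (use K0 in auto)
  have m: "(\<lambda>t. t powr (\<gamma> / p * \<beta>)) \<in> borel_measurable (lebesgue_on {0..1})"
  proof (rule continuous_imp_measurable_on_sets_lebesgue)
    show "continuous_on {0..1} (\<lambda>t::real. t powr (\<gamma> / p * \<beta>))"
      by (rule continuous_on_powr'[OF continuous_on_id continuous_on_const]) (use c_pos in auto)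
  qed auto
  have b: "bounded ((\<lambda>t. t powr (\<gamma> / p * \<beta>)) ` {0..1})"
    unfolding bounded_iff using c_pos by (intro exI[of _ 1]) (auto intro!: powr_le1)
  have "(\<lambda>t. t powr (\<gamma> / p * \<beta>) * K t) absolutely_integrable_on {0..1}"
    by (rule absolutely_integrable_bounded_measurable_product_real[OF m _ b Ka]) auto
  then show ?thesis unfolding psi_def[abs_def] using absolutely_integrable_on_def by blast
qed

lemma Psi_cont: "continuous_on {0..1} Psi"
  unfolding Psi_def[abs_def] by (rule indefinite_integral_continuous_1[OF psi_int])

lemma Psi_deriv: "t \<in> {0<..<1} \<Longrightarrow> (Psi has_real_derivative psi t) (at t)"
proof -
  assume t: "t \<in> {0<..<1}"
  have Kc: "isCont K t" using A4_d1[OF t] DERIV_isCont by blast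
  have Pc: "isCont (\<lambda>t. t powr (\<gamma> / p * \<beta>)) t"
    by (rule DERIV_isCont[OF has_real_derivative_powr]) (use t in auto)
  have "isCont psi t" unfolding psi_def[abs_def] by (rule isCont_mult[OF Pc Kc])
  then have cw: "continuous (at t within ({0..1} - {})) psi"
    by (rule continuous_at_imp_continuous_within)
  have "((\<lambda>u. integral {0..u} psi) has_vector_derivative psi t) (at t within ({0..1} - {}))"
    by (rule integral_has_vector_derivative_continuous_at[OF psi_int _ _ cw]) (use t in auto)
  then have "(Psi has_vector_derivative psi t) (at t within {0..1})"
    unfolding Psi_def[abs_def] by simp
  moreover have "at t within {0..1} = at t" using t by (intro at_within_Icc_at) auto
  ultimately show ?thesis by (simp add: has_real_derivative_iff_has_vector_derivative)
qed

lemma FF_deriv: "s \<in> {0<..<1} \<Longrightarrow> (FF has_real_derivative ff s) (at s)"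
proof -
  assume s: "s \<in> {0<..<1}"
  have d2: "((\<lambda>t. t powr p) has_real_derivative p * s powr (p - 1)) (at s)"
    using s by (intro has_real_derivative_powr) auto
  have "(FF has_real_derivative psi (s powr p) * (p * s powr (p - 1)) / p\<^sup>2) (at s)"
    unfolding FF_def[abs_def] by (intro DERIV_cdivide DERIV_chain2[OF Psi_deriv[OF powr_in01[OF s]] d2])
  moreover have "psi (s powr p) * (p * s powr (p - 1)) / p\<^sup>2 = ff s"
  proof -
    have "(s powr p) powr (\<gamma> / p * \<beta>) = s powr (\<beta> * \<gamma>)" using p s by (simp add: powr_powr mult.commute)
    moreover have "s powr (\<beta> * \<gamma> - 1) * s powr p = s powr (\<beta> * \<gamma>) * s powr (p - 1)"
      using s by (simp add: powr_add[symmetric] algebra_simps)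
    ultimately show ?thesis unfolding psi_def ff_def Phi_def using s p
      by (simp add: power2_eq_square)
  qed
  ultimately show ?thesis by simp
qed

lemma ff_deriv: "s \<in> {0<..<1} \<Longrightarrow> (ff has_real_derivative ff' s) (at s)"
proof -
  assume s: "s \<in> {0<..<1}"
  have d1: "((\<lambda>t. t powr (\<beta> * \<gamma> - 1)) has_real_derivative (\<beta> * \<gamma> - 1) * s powr (\<beta> * \<gamma> - 1 - 1)) (at s)"
    using s by (intro has_real_derivative_powr) auto
  show ?thesis unfolding ff_def[abs_def] ff'_def
    by (rule DERIV_cong[OF DERIV_mult[OF d1 Phi_deriv[OF s]]]) (simp add: algebra_simps)
qed

end


context kern begin

lemma ff'_bound: obtains M2 where "\<And>s. s \<in> {0<..<1} \<Longrightarrow> \<bar>ff' s\<bar> \<le> M2 * s powr (\<beta> * \<gamma> + p - 2)" "0 \<le> M2"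
proof -
  obtain G M1 where G: "\<And>t. t \<in> {0<..<1} \<Longrightarrow> \<bar>phi t\<bar> \<le> G * t powr (p - 1)" "0 \<le> G"
    using phi_bounds by metis
  obtain BK where BK: "\<And>t. t \<in> {0<..<1} \<Longrightarrow> \<bar>Phi t\<bar> \<le> BK / p * t powr p" "0 \<le> BK"
    using Phi_bound by metis
  show ?thesis
  proof (rule that[of "\<bar>\<beta> * \<gamma> - 1\<bar> * (BK / p) + G"])
    fix s :: real assume s: "s \<in> {0<..<1}"
    have e1: "\<bar>(\<beta> * \<gamma> - 1) * s powr (\<beta> * \<gamma> - 1 - 1) * Phi s\<bar> \<le> \<bar>\<beta> * \<gamma> - 1\<bar> * (BK / p) * s powr (\<beta> * \<gamma> + p - 2)"
    proof -
      have "\<bar>(\<beta> * \<gamma> - 1) * s powr (\<beta> * \<gamma> - 1 - 1) * Phi s\<bar> = \<bar>\<beta> * \<gamma> - 1\<bar> * (s powr (\<beta> * \<gamma> - 1 - 1) * \<bar>Phi s\<bar>)"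
        using s by (simp add: abs_mult)
      also have "\<dots> \<le> \<bar>\<beta> * \<gamma> - 1\<bar> * (s powr (\<beta> * \<gamma> - 1 - 1) * (BK / p * s powr p))"
        using BK(1)[OF s] s by (intro mult_left_mono) auto
      also have "\<dots> = \<bar>\<beta> * \<gamma> - 1\<bar> * (BK / p) * s powr (\<beta> * \<gamma> + p - 2)"
        using s by (simp add: powr_add[symmetric] algebra_simps)
      finally show ?thesis .
    qed
    have e2: "\<bar>s powr (\<beta> * \<gamma> - 1) * phi s\<bar> \<le> G * s powr (\<beta> * \<gamma> + p - 2)"
    proof -
      have "\<bar>s powr (\<beta> * \<gamma> - 1) * phi s\<bar> = s powr (\<beta> * \<gamma> - 1) * \<bar>phi s\<bar>"
        using s by (simp add: abs_mult)
      also have "\<dots> \<le> s powr (\<beta> * \<gamma> - 1) * (G * s powr (p - 1))"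
        using G(1)[OF s] s by (intro mult_left_mono) auto
      also have "\<dots> = G * s powr (\<beta> * \<gamma> + p - 2)"
        using s by (simp add: powr_add[symmetric] algebra_simps)
      finally show ?thesis .
    qed
    show "\<bar>ff' s\<bar> \<le> (\<bar>\<beta> * \<gamma> - 1\<bar> * (BK / p) + G) * s powr (\<beta> * \<gamma> + p - 2)"
      unfolding ff'_def using e1 e2 by (simp add: algebra_simps)
  qed (use G BK p in auto)
qed

definition "T k i = (\<Sum>j=2..i. u j k powr (p - 1) * deriv (gK K) (u j k powr p))"

lemma u_in: "1 \<le> j \<Longrightarrow> j \<le> k \<Longrightarrow> u j k \<in> {0<..<1}"
  unfolding u_def by (auto simp: field_simps)

lemma T_phi: "i \<le> k \<Longrightarrow> T k i = (\<Sum>j=2..i. phi (u j k))"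
proof -
  assume ik: "i \<le> k"
  have "deriv (gK K) (u j k powr p) = g1 (u j k powr p)" if "j \<in> {2..i}" for j
    using deriv_gK powr_in01 u_in[of j k] that ik by auto
  then show ?thesis unfolding T_def phi_def by (intro sum.cong) auto
qed

lemma inner: obtains C1 where "0 \<le> C1" "\<And>k i. 1 \<le> i \<Longrightarrow> i \<le> k \<Longrightarrow>
   \<bar>(1 / (real k + 1)) * T k i - (Phi (u i k) - Phi (u 1 k))\<bar> \<le> C1 * (1 / (real k + 1)) powr (p / 2)"
proof -
  obtain G M1 where M1: "\<And>t. t \<in> {0<..<1} \<Longrightarrow> \<bar>phi' t\<bar> \<le> M1 * t powr (p - 2)" "0 \<le> M1"
    using phi_bounds by metis
  show ?thesis
  proof (rule that[of "M1 * (2 / p)"])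
    fix k i :: nat assume i: "1 \<le> i" "i \<le> k"
    have "\<bar>(\<Sum>j=2..i. (1 / (real k + 1)) * phi (u j k)) - (Phi (u i k) - Phi (u 1 k))\<bar>
          \<le> M1 * (2 / ((p - 1) + 1)) * (1 / (real k + 1)) powr (((p - 1) + 1) / 2)"
      by (rule riemann_sum[OF _ _ M1(2) _ _ _ i]) (use p Phi_deriv phi_deriv M1(1) in auto)
    then show "\<bar>(1 / (real k + 1)) * T k i - (Phi (u i k) - Phi (u 1 k))\<bar> \<le> M1 * (2 / p) * (1 / (real k + 1)) powr (p / 2)"
      using T_phi[OF i(2)] by (simp add: sum_distrib_left)
  qed (use M1 p in auto)
qed


lemma swap_div: "(y::real) * (x / z) = x * (y / z)" by simp

lemma uh: "u j k = real j * (1 / (real k + 1))" unfolding u_def by simp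

lemma outer: obtains C2 e2 where "0 \<le> C2" "0 < e2" "\<And>k. 1 \<le> k \<Longrightarrow>
  \<bar>(\<Sum>i=2..k. u i k powr (\<beta> * \<gamma>) / real i * Phi (u i k)) - (FF (u k k) - FF (u 1 k))\<bar> \<le> C2 * (1 / (real k + 1)) powr e2"
proof -
  obtain M2 where M2: "\<And>s. s \<in> {0<..<1} \<Longrightarrow> \<bar>ff' s\<bar> \<le> M2 * s powr (\<beta> * \<gamma> + p - 2)" "0 \<le> M2"
    using ff'_bound by metis
  define a' where "a' = min (\<beta> * \<gamma> + p - 1) (1/2)"
  have a': "-1 < a'" "a' \<le> 1" "a' \<le> \<beta> * \<gamma> + p - 1" unfolding a'_def using p gam beta by (auto simp: add_pos_pos)
  show ?thesis
  proof (rule that[of "M2 * (2 / (a' + 1))" "(a' + 1) / 2"])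
    fix k :: nat assume k: "1 \<le> k"
    have B: "\<bar>ff' s\<bar> \<le> M2 * s powr (a' - 1)" if s: "0 < s" "s < 1" for s
    proof -
      have "s powr (\<beta> * \<gamma> + p - 2) \<le> s powr (a' - 1)" using s a' by (intro powr_mono') auto
      then show ?thesis using M2 s by (meson greaterThanLessThan_iff mult_left_mono order_trans)
    qed
    have R: "\<bar>(\<Sum>i=2..k. (1 / (real k + 1)) * ff (u i k)) - (FF (u k k) - FF (u 1 k))\<bar>
          \<le> M2 * (2 / (a' + 1)) * (1 / (real k + 1)) powr ((a' + 1) / 2)"
      by (rule riemann_sum[where a=a' and M=M2 and F=FF and f=ff and f'=ff' and n=k and k=k]) (use FF_deriv ff_deriv a' M2 B k in auto)
    have eq: "(1 / (real k + 1)) * ff (u i k) = u i k powr (\<beta> * \<gamma>) / real i * Phi (u i k)" if "i \<in> {2..k}" for i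
    proof -
      have ui: "u i k > 0" using u_in[of i k] that by auto
      have "u i k powr (\<beta> * \<gamma> - 1) = u i k powr (\<beta> * \<gamma>) / u i k" using ui by (simp add: powr_diff)
      moreover have "(1 / (real k + 1)) / u i k = 1 / real i" using that by (simp add: uh)
      ultimately have "(1 / (real k + 1)) * u i k powr (\<beta> * \<gamma> - 1) = u i k powr (\<beta> * \<gamma>) / real i"
        using swap_div[of "1 / (real k + 1)" "u i k powr (\<beta> * \<gamma>)" "u i k"] by simp
      then show ?thesis unfolding ff_def by (simp only: mult.assoc[symmetric])
    qed
    show "\<bar>(\<Sum>i=2..k. u i k powr (\<beta> * \<gamma>) / real i * Phi (u i k)) - (FF (u k k) - FF (u 1 k))\<bar> \<le> M2 * (2 / (a' + 1)) * (1 / (real k + 1)) powr ((a' + 1) / 2)"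
    proof -
      have "(\<Sum>i=2..k. (1 / (real k + 1)) * ff (u i k)) = (\<Sum>i=2..k. u i k powr (\<beta> * \<gamma>) / real i * Phi (u i k))"
        by (rule sum.cong[OF refl eq])
      then show ?thesis using R by simp
    qed
  qed (use M2 a' in auto)
qed

lemma Q_bound: "(\<Sum>i=2..k. u i k powr (\<beta> * \<gamma>) / real i) \<le> 1 + 1 / (\<beta> * \<gamma>)"
proof -
  define h where "h = 1 / (real k + 1)"
  have h: "0 < h" "h * real k \<le> 1" unfolding h_def by (auto simp: field_simps)
  define b where "b = \<beta> * \<gamma>"
  have b: "b > 0" unfolding b_def using beta gam by simp
  have "(\<Sum>i=2..k. u i k powr b / real i) \<le> (\<Sum>i=1..k. u i k powr b / real i)"
    by (rule sum_mono2) auto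
  also have "\<dots> \<le> 1 + 1 / b"
  proof (cases "b \<ge> 1")
    case True
    have "(\<Sum>i=1..k. u i k powr b / real i) \<le> (\<Sum>i=1..k. h)"
    proof (rule sum_mono)
      fix i assume i: "i \<in> {1..k}"
      have "u i k powr b \<le> u i k" using u_in[of i k] i True by (intro powr_le_one_le) auto
      then show "u i k powr b / real i \<le> h" using i by (simp add: uh h_def divide_right_mono field_simps)
    qed
    also have "\<dots> = h * real k" by simp
    finally have "(\<Sum>i=1..k. u i k powr b / real i) \<le> 1" using h by linarith
    moreover have "0 \<le> 1 / b" using b by simp
    ultimately show ?thesis by linarith
  next
    case False
    have "(\<Sum>i=1..k. u i k powr b / real i) = h powr b * (\<Sum>i=1..k. real i powr (b - 1))"
      unfolding sum_distrib_left
    proof (rule sum.cong)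
      fix i assume i: "i \<in> {1..k}"
      have "u i k = real i * h" by (simp add: uh h_def)
      then have "u i k powr b = real i powr b * h powr b" using h by (simp add: powr_mult)
      then show "u i k powr b / real i = h powr b * real i powr (b - 1)"
        using h i by (simp add: powr_diff)
    qed simp
    also have "\<dots> \<le> h powr b * (real k powr b / b)"
      using sum_powr_le[of b k] b False h by (intro mult_left_mono) auto
    also have "\<dots> = (h * real k) powr b / b" using h by (simp add: powr_mult)
    also have "\<dots> \<le> 1 / b" using h b by (intro divide_right_mono powr_le1) auto
    finally show ?thesis by simp
  qed
  finally show ?thesis unfolding b_def .
qed


definition "aa k i = 1 / (real k + 1) * (u i k powr (\<beta> * \<gamma>) * ((1 / real i) * T k i))"

lemma var_bound: obtains C3 where "0 \<le> C3" "\<And>k. (\<Sum>i=2..k. (aa k i)\<^sup>2) \<le> C3 * (1 / (real k + 1)) powr p"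
proof -
  obtain G M1 where G: "\<And>t. t \<in> {0<..<1} \<Longrightarrow> \<bar>phi t\<bar> \<le> G * t powr (p - 1)" "0 \<le> G"
    using phi_bounds by metis
  define c0 where "c0 = G / p"
  have c0: "c0 \<ge> 0" unfolding c0_def using G p by simp
  show ?thesis
  proof (rule that[of "c0\<^sup>2 / p"])
    fix k :: nat
    define h where "h = 1 / (real k + 1)"
    have h: "0 < h" "h \<le> 1" "h * real k \<le> 1" unfolding h_def by (auto simp: field_simps)
    have uj: "u j k = real j * h" for j by (simp add: uh h_def)
    have Tb: "\<bar>T k i\<bar> \<le> G * h powr (p - 1) * (real i powr p / p)" if i: "i \<in> {2..k}" for i
    proof -
      have "\<bar>T k i\<bar> \<le> (\<Sum>j=2..i. \<bar>phi (u j k)\<bar>)" using i by (simp add: T_phi sum_abs)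
      also have "\<dots> \<le> (\<Sum>j=2..i. G * h powr (p - 1) * real j powr (p - 1))"
      proof (rule sum_mono)
        fix j assume j: "j \<in> {2..i}"
        have "\<bar>phi (u j k)\<bar> \<le> G * u j k powr (p - 1)" using G(1) u_in[of j k] j i by auto
        then show "\<bar>phi (u j k)\<bar> \<le> G * h powr (p - 1) * real j powr (p - 1)"
          using h by (simp add: uj powr_mult mult_ac)
      qed
      also have "\<dots> \<le> (\<Sum>j=1..i. G * h powr (p - 1) * real j powr (p - 1))"
        by (rule sum_mono2) (use G in auto)
      also have "\<dots> = G * h powr (p - 1) * (\<Sum>j=1..i. real j powr (p - 1))" by (simp add: sum_distrib_left)
      also have "\<dots> \<le> G * h powr (p - 1) * (real i powr p / p)"
        using sum_powr_le[of p i] p G by (intro mult_left_mono) auto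
      finally show ?thesis .
    qed
    have ab: "\<bar>aa k i\<bar> \<le> c0 * h powr p * real i powr (p - 1)" if i: "i \<in> {2..k}" for i
    proof -
      have ub: "u i k powr (\<beta> * \<gamma>) \<le> 1" using u_in[of i k] i beta gam by (intro powr_le1) auto
      have "\<bar>aa k i\<bar> = h * u i k powr (\<beta> * \<gamma>) * ((1 / real i) * \<bar>T k i\<bar>)"
        unfolding aa_def h_def by (simp add: abs_mult)
      also have "\<dots> \<le> h * 1 * ((1 / real i) * (G * h powr (p - 1) * (real i powr p / p)))"
        using ub Tb[OF i] h by (intro mult_mono) auto
      also have "\<dots> = c0 * (h * h powr (p - 1)) * (real i powr p / real i)"
        unfolding c0_def by (simp add: field_simps)
      also have "\<dots> = c0 * h powr p * real i powr (p - 1)"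
      proof -
        have "h * h powr (p - 1) = h powr p" using h by (simp add: powr_diff)
        moreover have "real i powr p / real i = real i powr (p - 1)" using i by (simp add: powr_diff)
        ultimately show ?thesis by simp
      qed
      finally show ?thesis .
    qed
    have "(\<Sum>i=2..k. (aa k i)\<^sup>2) \<le> (\<Sum>i=2..k. c0\<^sup>2 * (h powr p)\<^sup>2 * real i powr (p - 1))"
    proof (rule sum_mono)
      fix i assume i: "i \<in> {2..k}"
      have "(aa k i)\<^sup>2 = \<bar>aa k i\<bar>\<^sup>2" by simp
      also have "\<dots> \<le> (c0 * h powr p * real i powr (p - 1))\<^sup>2"
        by (rule power_mono[OF ab[OF i]]) simp
      also have "\<dots> = c0\<^sup>2 * (h powr p)\<^sup>2 * (real i powr (p - 1))\<^sup>2" by (simp add: power_mult_distrib)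
      also have "(real i powr (p - 1))\<^sup>2 \<le> real i powr (p - 1)"
      proof -
        have "real i powr (p - 1) \<le> 1 powr (p - 1)" using i p by (intro powr_mono2') auto
        then have "real i powr (p - 1) \<le> 1" by simp
        then show ?thesis by (simp add: power2_eq_square mult_left_le_one_le)
      qed
      then have "c0\<^sup>2 * (h powr p)\<^sup>2 * (real i powr (p - 1))\<^sup>2 \<le> c0\<^sup>2 * (h powr p)\<^sup>2 * real i powr (p - 1)"
        by (intro mult_left_mono) auto
      finally show "(aa k i)\<^sup>2 \<le> c0\<^sup>2 * (h powr p)\<^sup>2 * real i powr (p - 1)" .
    qed
    also have "\<dots> \<le> (\<Sum>i=1..k. c0\<^sup>2 * (h powr p)\<^sup>2 * real i powr (p - 1))"
      by (rule sum_mono2) auto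
    also have "\<dots> = c0\<^sup>2 * (h powr p)\<^sup>2 * (\<Sum>i=1..k. real i powr (p - 1))" by (simp add: sum_distrib_left)
    also have "\<dots> \<le> c0\<^sup>2 * (h powr p)\<^sup>2 * (real k powr p / p)"
      using sum_powr_le[of p k] p by (intro mult_left_mono) auto
    also have "\<dots> = c0\<^sup>2 / p * h powr p * (h * real k) powr p"
      using h by (simp add: power2_eq_square powr_mult field_simps)
    also have "\<dots> \<le> c0\<^sup>2 / p * h powr p * 1"
      using h p by (intro mult_left_mono powr_le1) auto
    finally show "(\<Sum>i=2..k. (aa k i)\<^sup>2) \<le> c0\<^sup>2 / p * (1 / (real k + 1)) powr p" by (simp add: h_def)
  qed (use p in auto)
qed


lemma hpow_lim: "r > 0 \<Longrightarrow> (\<lambda>k. (1 / (real k + 1)) powr r) \<longlonglongrightarrow> 0"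
proof -
  assume r: "r > 0"
  have "(\<lambda>k. 1 / (real k + 1)) \<longlonglongrightarrow> 0"
    using LIMSEQ_inverse_real_of_nat by (simp add: inverse_eq_divide add.commute)
  then show ?thesis by (rule tendsto_zero_powrI[OF _ tendsto_const]) (use r in auto)
qed

lemma FF_lims: "(\<lambda>k. FF (u k k) - FF (u 1 k)) \<longlonglongrightarrow> 1 / p\<^sup>2 * integral {0..1} (\<lambda>t. t powr (\<gamma> / p * \<beta>) * K t)"
proof -
  have l1: "(\<lambda>k. u k k) \<longlonglongrightarrow> 1"
    using LIMSEQ_n_over_Suc_n[where 'a=real] by (simp add: u_def add.commute)
  have l0: "(\<lambda>k. u 1 k) \<longlonglongrightarrow> 0"
    using LIMSEQ_inverse_real_of_nat by (simp add: u_def inverse_eq_divide add.commute)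
  have u01: "u j k \<in> {0..1}" if "j \<le> k" for j k using that by (auto simp: u_def field_simps)
  have p1: "(\<lambda>k. u k k powr p) \<longlonglongrightarrow> 1 powr p"
    by (rule tendsto_powr[OF l1 tendsto_const]) simp
  have p0: "(\<lambda>k. u 1 k powr p) \<longlonglongrightarrow> 0"
    by (rule tendsto_zero_powrI[OF l0 tendsto_const]) (use p in \<open>auto simp: u_def\<close>)
  have in01: "x powr p \<in> {0..1}" if "x \<in> {0..1}" for x using that p by (auto intro: powr_le1)
  have c1: "(\<lambda>k. Psi (u k k powr p)) \<longlonglongrightarrow> Psi 1"
    using continuous_on_tendsto_compose[OF Psi_cont p1] in01 u01 by auto
  have c0: "(\<lambda>k. Psi (u 1 k powr p)) \<longlonglongrightarrow> Psi 0"
    using continuous_on_tendsto_compose[OF Psi_cont p0] in01 u01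
    by (auto intro!: always_eventually simp: u_def field_simps)
  have "(\<lambda>k. Psi (u k k powr p) / p\<^sup>2 - Psi (u 1 k powr p) / p\<^sup>2) \<longlonglongrightarrow> Psi 1 / p\<^sup>2 - Psi 0 / p\<^sup>2"
    by (intro tendsto_intros c1 c0) (use p in auto)
  then show ?thesis unfolding FF_def by (simp add: Psi_def psi_def[abs_def])
qed

lemma mean_lim: "(\<lambda>k. \<Sum>i=2..k. aa k i) \<longlonglongrightarrow> 1 / p\<^sup>2 * integral {0..1} (\<lambda>t. t powr (\<gamma> / p * \<beta>) * K t)"
proof -
  obtain C1 where C1: "0 \<le> C1" "\<And>k i. 1 \<le> i \<Longrightarrow> i \<le> k \<Longrightarrow>
     \<bar>(1 / (real k + 1)) * T k i - (Phi (u i k) - Phi (u 1 k))\<bar> \<le> C1 * (1 / (real k + 1)) powr (p / 2)"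
    using inner by blast
  obtain C2 e2 where C2: "0 \<le> C2" "0 < e2" "\<And>k. 1 \<le> k \<Longrightarrow>
    \<bar>(\<Sum>i=2..k. u i k powr (\<beta> * \<gamma>) / real i * Phi (u i k)) - (FF (u k k) - FF (u 1 k))\<bar> \<le> C2 * (1 / (real k + 1)) powr e2"
    using outer by blast
  obtain BK where BK: "\<And>t. t \<in> {0<..<1} \<Longrightarrow> \<bar>Phi t\<bar> \<le> BK / p * t powr p" "0 \<le> BK"
    using Phi_bound by blast
  define Qb where "Qb = 1 + 1 / (\<beta> * \<gamma>)"
  have Qb: "Qb \<ge> 0" unfolding Qb_def using beta gam by simp
  define bnd where "bnd k = C2 * (1 / (real k + 1)) powr e2 + Qb * (BK / p) * (1 / (real k + 1)) powr p
      + Qb * C1 * (1 / (real k + 1)) powr (p / 2)" for k :: nat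
  have bnd0: "bnd \<longlonglongrightarrow> 0"
  proof -
    have "bnd \<longlonglongrightarrow> C2 * 0 + Qb * (BK / p) * 0 + Qb * C1 * 0"
      unfolding bnd_def[abs_def] using p C2(2)
      by (intro tendsto_intros hpow_lim) auto
    then show ?thesis by simp
  qed
  have D: "norm ((\<Sum>i=2..k. aa k i) - (FF (u k k) - FF (u 1 k))) \<le> bnd k" if k: "k \<ge> 1" for k
  proof -
    define h where "h = 1 / (real k + 1)"
    define w where "w i = u i k powr (\<beta> * \<gamma>) / real i" for i
    define r where "r i = h * T k i - (Phi (u i k) - Phi (u 1 k))" for i
    have w0: "w i \<ge> 0" for i unfolding w_def by simp
    have aaw: "aa k i = w i * (Phi (u i k) - Phi (u 1 k)) + w i * r i" for i
      unfolding aa_def w_def r_def h_def by (simp add: algebra_simps)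
    have "(\<Sum>i=2..k. aa k i) = (\<Sum>i=2..k. w i * Phi (u i k)) - Phi (u 1 k) * (\<Sum>i=2..k. w i) + (\<Sum>i=2..k. w i * r i)"
      unfolding aaw sum.distrib right_diff_distrib sum_subtractf by (simp add: sum_distrib_right[symmetric] mult.commute)
    then have eq: "(\<Sum>i=2..k. aa k i) - (FF (u k k) - FF (u 1 k)) =
        ((\<Sum>i=2..k. w i * Phi (u i k)) - (FF (u k k) - FF (u 1 k))) - Phi (u 1 k) * (\<Sum>i=2..k. w i) + (\<Sum>i=2..k. w i * r i)"
      by simp
    have t1: "\<bar>(\<Sum>i=2..k. w i * Phi (u i k)) - (FF (u k k) - FF (u 1 k))\<bar> \<le> C2 * h powr e2"
      using C2(3)[OF k] unfolding w_def h_def .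
    have Q: "(\<Sum>i=2..k. w i) \<le> Qb" unfolding w_def Qb_def by (rule Q_bound)
    have Q0: "(\<Sum>i=2..k. w i) \<ge> 0" using w0 by (simp add: sum_nonneg)
    have P1: "\<bar>Phi (u 1 k)\<bar> \<le> BK / p * h powr p"
      using BK(1)[OF u_in[of 1 k]] k by (simp add: u_def h_def)
    have t2: "\<bar>Phi (u 1 k) * (\<Sum>i=2..k. w i)\<bar> \<le> Qb * (BK / p) * h powr p"
    proof -
      have "\<bar>Phi (u 1 k) * (\<Sum>i=2..k. w i)\<bar> = \<bar>Phi (u 1 k)\<bar> * (\<Sum>i=2..k. w i)"
        using Q0 by (simp add: abs_mult)
      also have "\<dots> \<le> (BK / p * h powr p) * Qb" by (intro mult_mono P1 Q) (use Q0 BK(2) p in auto)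
      finally show ?thesis by (simp add: mult_ac)
    qed
    have t3: "\<bar>\<Sum>i=2..k. w i * r i\<bar> \<le> Qb * C1 * h powr (p / 2)"
    proof -
      have "\<bar>\<Sum>i=2..k. w i * r i\<bar> \<le> (\<Sum>i=2..k. w i * (C1 * h powr (p / 2)))"
      proof (rule order_trans[OF sum_abs sum_mono])
        fix i assume i: "i \<in> {2..k}"
        have "\<bar>r i\<bar> \<le> C1 * h powr (p / 2)" using C1(2)[of i k] i unfolding r_def h_def by auto
        then show "\<bar>w i * r i\<bar> \<le> w i * (C1 * h powr (p / 2))"
          using w0[of i] by (simp add: abs_mult mult_left_mono)
      qed
      also have "\<dots> = (\<Sum>i=2..k. w i) * (C1 * h powr (p / 2))" by (simp add: sum_distrib_right)
      also have "\<dots> \<le> Qb * (C1 * h powr (p / 2))" using Q C1(1) by (intro mult_right_mono) auto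
      finally show ?thesis by (simp add: mult_ac)
    qed
    show ?thesis unfolding eq bnd_def h_def[symmetric] real_norm_def using t1 t2 t3 by linarith
  qed
  have "(\<lambda>k. (\<Sum>i=2..k. aa k i) - (FF (u k k) - FF (u 1 k))) \<longlonglongrightarrow> 0"
    by (rule Lim_null_comparison[OF _ bnd0]) (use D in \<open>auto intro: eventually_sequentiallyI\<close>)
  from tendsto_add[OF this FF_lims] show ?thesis by simp
qed

end

theorem lemma2:
  fixes M :: "'a measure" and E :: "nat \<Rightarrow> 'a \<Rightarrow> real"
    and K K' K'' :: "real \<Rightarrow> real"
    and p \<gamma> \<beta> :: real
  assumes p: "0 < p" "p < 1" and gam: "\<gamma> > 0" and beta: "\<beta> > 0"
    \<comment> \<open>[A1] (on the support)\<close>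
    and A1_mono: "\<And>x y. 0 < x \<Longrightarrow> x \<le> y \<Longrightarrow> K y \<le> K x"
    and A1_rc: "\<And>x. 0 < x \<Longrightarrow> continuous (at_right x) K"
    \<comment> \<open>[A2]\<close>
    and A2_out: "\<And>s. s \<notin> {0<..1} \<Longrightarrow> K s = 0"
    and A2_nonneg: "\<And>s. s \<in> {0<..1} \<Longrightarrow> K s \<ge> 0"
    \<comment> \<open>[A3]\<close>
    and A3: "(K has_integral 1) UNIV"
    \<comment> \<open>[A4]\<close>
    and A4_d1: "\<And>x. x \<in> {0<..<1} \<Longrightarrow> (K has_real_derivative K' x) (at x)"
    and A4_d2: "\<And>x. x \<in> {0<..<1} \<Longrightarrow> (K' has_real_derivative K'' x) (at x)"
    and A4_bdd: "bounded (range K)" "bounded (K' ` {0<..<1})" "bounded (K'' ` {0<..<1})"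
    \<comment> \<open>E_1, E_2, ... iid standard exponential\<close>
    and M: "prob_space M"
    and indep: "prob_space.indep_vars M (\<lambda>_. borel) E {1..}"
    and expo: "\<And>i. i \<ge> 1 \<Longrightarrow> distributed M lborel (E i) (exponential_density 1)"
  shows "conv_in_prob M
           (\<lambda>k \<omega>. 1 / (real k + 1) *
              (\<Sum>i = 2..k. u i k powr (\<beta> * \<gamma>) *
                 ((1 / real i) * (\<Sum>j = 2..i. u j k powr (p - 1) * deriv (gK K) (u j k powr p)))
                 * E i \<omega>))
           (1 / p\<^sup>2 * integral {0..1} (\<lambda>t. t powr ((\<gamma> / p) * \<beta>) * K t))"
proof -
  interpret P: prob_space M by (rule M)
  interpret k: kern K K' K'' p \<gamma> \<beta>
    by (unfold_locales) (use p gam beta A2_out A2_nonneg A3 A4_d1 A4_d2 A4_bdd in auto)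
  define c where "c = 1 / p\<^sup>2 * integral {0..1} (\<lambda>t. t powr ((\<gamma> / p) * \<beta>) * K t)"
  define X where "X k \<omega> = 1 / (real k + 1) *
              (\<Sum>i = 2..k. u i k powr (\<beta> * \<gamma>) *
                 ((1 / real i) * (\<Sum>j = 2..i. u j k powr (p - 1) * deriv (gK K) (u j k powr p)))
                 * E i \<omega>)" for k \<omega>
  have Xeq: "X k \<omega> = (\<Sum>i\<in>{2..k}. k.aa k i * E i \<omega>)" for k \<omega>
  proof -
    have "X k \<omega> = 1 / (real k + 1) * (\<Sum>i = 2..k. u i k powr (\<beta> * \<gamma>) * ((1 / real i) * k.T k i) * E i \<omega>)"
      unfolding X_def k.T_def by simp
    then show ?thesis unfolding k.aa_def by (simp add: sum_distrib_left mult.assoc)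
  qed
  have meanlim: "(\<lambda>k. \<Sum>i\<in>{2..k}. k.aa k i) \<longlonglongrightarrow> c"
    using k.mean_lim unfolding c_def by (simp add: mult.commute)
  obtain C3 where C3: "0 \<le> C3" "\<And>k. (\<Sum>i=2..k. (k.aa k i)\<^sup>2) \<le> C3 * (1 / (real k + 1)) powr p"
    using k.var_bound by blast
  have measE: "E i \<in> borel_measurable M" if "i \<ge> 1" for i
    using distributed_measurable[OF expo[OF that]] by simp
  show ?thesis
    unfolding conv_in_prob_def c_def[symmetric] X_def[symmetric]
  proof (intro allI impI)
    fix \<epsilon> :: real assume eps: "\<epsilon> > 0"
    have ev: "eventually (\<lambda>k. dist (\<Sum>i\<in>{2..k}. k.aa k i) c < \<epsilon> / 2) sequentially"
      using tendstoD[OF meanlim, of "\<epsilon> / 2"] eps by simp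
    have ub: "(\<lambda>k. C3 * (1 / (real k + 1)) powr p / (\<epsilon> / 2)\<^sup>2) \<longlonglongrightarrow> C3 * 0 / (\<epsilon> / 2)\<^sup>2"
      by (intro tendsto_intros k.hpow_lim) (use p eps in auto)
    show "(\<lambda>k. measure M {\<omega> \<in> space M. \<epsilon> < \<bar>X k \<omega> - c\<bar>}) \<longlonglongrightarrow> 0"
    proof (rule tendsto_sandwich[OF _ _ tendsto_const])
      show "eventually (\<lambda>k. 0 \<le> measure M {\<omega> \<in> space M. \<epsilon> < \<bar>X k \<omega> - c\<bar>}) sequentially"
        by simp
      show "eventually (\<lambda>k. measure M {\<omega> \<in> space M. \<epsilon> < \<bar>X k \<omega> - c\<bar>} \<le> C3 * (1 / (real k + 1)) powr p / (\<epsilon> / 2)\<^sup>2) sequentially"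
        using ev
      proof eventually_elim
        case (elim k)
        define m where "m = (\<Sum>i\<in>{2..k}. k.aa k i)"
        have mc: "\<bar>m - c\<bar> < \<epsilon> / 2" using elim unfolding m_def dist_real_def .
        have mY: "(\<lambda>\<omega>. \<Sum>i\<in>{2..k}. k.aa k i * E i \<omega>) \<in> borel_measurable M"
          by (intro borel_measurable_sum borel_measurable_times borel_measurable_const measE) auto
        have sub: "{\<omega> \<in> space M. \<epsilon> < \<bar>X k \<omega> - c\<bar>} \<subseteq> {\<omega> \<in> space M. \<epsilon> / 2 \<le> \<bar>(\<Sum>i\<in>{2..k}. k.aa k i * E i \<omega>) - m\<bar>}"
          using mc unfolding Xeq by auto (smt (verit))
        have sets: "{\<omega> \<in> space M. \<epsilon> / 2 \<le> \<bar>(\<Sum>i\<in>{2..k}. k.aa k i * E i \<omega>) - m\<bar>} \<in> sets M"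
          using mY by measurable
        have "measure M {\<omega> \<in> space M. \<epsilon> < \<bar>X k \<omega> - c\<bar>} \<le> measure M {\<omega> \<in> space M. \<epsilon> / 2 \<le> \<bar>(\<Sum>i\<in>{2..k}. k.aa k i * E i \<omega>) - m\<bar>}"
          by (rule P.finite_measure_mono[OF sub sets])
        also have "\<dots> \<le> (\<Sum>i\<in>{2..k}. (k.aa k i)\<^sup>2) / (\<epsilon> / 2)\<^sup>2"
          unfolding m_def by (rule prob_part[OF M indep expo]) (use eps in auto)
        also have "\<dots> \<le> C3 * (1 / (real k + 1)) powr p / (\<epsilon> / 2)\<^sup>2"
          using C3(2)[of k] by (intro divide_right_mono) auto
        finally show ?case .
      qed
      show "(\<lambda>k. C3 * (1 / (real k + 1)) powr p / (\<epsilon> / 2)\<^sup>2) \<longlonglongrightarrow> 0" using ub by simp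
    qed
  qed
qed

end
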